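(* For $z\in\mathbb{C}$ with $\mathrm{Re}(z)>-1$, $$\zeta_E(z)=\frac12+\frac12\, z\int_1^\infty\frac{\overline E_0(-t)}{t^{z+1}}\,dt .$$ In particular, $$\tilde\gamma_0=\frac12+\frac12\sum_{j=1}^\infty(-1)^{j+1}\frac{1}{j(j+1)}=\frac12\left(\psi(2)-\psi\left(\tfrac32\right)+1\right),$$ where $\psi=\Gamma'/\Gamma$ is the digamma function.
   Context: For $q>0$, $\zeta_E(z,q)=\sum_{n=0}^\infty (-1)^n (n+q)^{-z}$ for $\mathrm{Re}(z)>0$, extended by analytic continuation to an entire function of $z$; $\zeta_E(z)=\zeta_E(z,1)=\sum_{n\ge1}(-1)^{n+1}n^{-z}$. The modified Stieltjes constants $\tilde\gamma_k(q)$ are defined by the Taylor expansion $\zeta_E(z,q)=\sum_{k=0}^\infty\frac{(-1)^k\tilde\gamma_k(q)}{k!}(z-1)^k$, and $\tilde\gamma_k:=\tilde\gamma_k(1)$ (so $\tilde\gamma_0=\zeta_E(1)$). $\overline E_0$ is the quasi-periodic Euler function: $\overline E_0(t)=1$ for $0\le t<1$ and $\overline E_0(t+1)=-\overline E_0(t)$ for all real $t$. *)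

theory Defs
  imports "HOL-Complex_Analysis.Complex_Analysis"
begin

definition zetaE_h :: "real \<Rightarrow> complex \<Rightarrow> complex" where
  "zetaE_h q = (THE f. f holomorphic_on UNIV \<and>
     (\<forall>z. Re z > 0 \<longrightarrow>
        (\<lambda>n. (-1) ^ n / (complex_of_real (real n + q)) powr z) sums f z))"

definition zetaE :: "complex \<Rightarrow> complex" where
  "zetaE = zetaE_h 1"

text \<open>Modified Stieltjes constants: zetaE(z,q) = sum_k (-1)^k gt_k(q)/k! (z-1)^k.\<close>
definition tilde_gamma :: "nat \<Rightarrow> real \<Rightarrow> complex" where
  "tilde_gamma k q = (-1) ^ k * (deriv ^^ k) (zetaE_h q) 1"

text \<open>Quasi-periodic Euler function: 1 on [0,1), E(t+1) = -E(t); equals (-1)^floor t.\<close>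
definition E0bar :: "real \<Rightarrow> real" where
  "E0bar t = (if even \<lfloor>t\<rfloor> then 1 else -1)"

end

theory Submission
  imports Defs "HOL-Real_Asymp.Real_Asymp"
begin


fun Dd :: "nat \<Rightarrow> (complex \<Rightarrow> complex) \<Rightarrow> complex \<Rightarrow> complex" where
  "Dd 0 f w = f w"
| "Dd (Suc k) f w = Dd k f w - Dd k f (w + 1)"

lemma Dd_deriv:
  assumes "\<And>w. Re w > 0 \<Longrightarrow> (f has_field_derivative g w) (at w)" "Re w > 0"
  shows "(Dd k f has_field_derivative Dd k g w) (at w)"
  using assms(2)
proof (induction k arbitrary: w)
  case 0
  then show ?case using assms(1) by simp
next
  case (Suc k)
  have e: "Dd (Suc k) f = (\<lambda>w. Dd k f w - Dd k f (w + 1))" by (rule ext) simp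
  have "((\<lambda>w. Dd k f (w + 1)) has_field_derivative Dd k g (w + 1)) (at w)"
  proof -
    have d1: "(Dd k f has_field_derivative Dd k g (w + 1)) (at (w + 1))"
      using Suc.IH[of "w+1"] Suc.prems by simp
    have d2: "((\<lambda>w. w + 1) has_field_derivative 1) (at w)"
      by (auto intro!: derivative_eq_intros)
    show ?thesis using DERIV_chain2[where f="Dd k f" and g="\<lambda>w. w + 1", OF d1 d2] by simp
  qed
  then show ?case unfolding e using Suc by (auto intro!: derivative_eq_intros)
qed

lemma Dd_bound:
  assumes "\<And>j w. Re w > 0 \<Longrightarrow> (F j has_field_derivative F (Suc j) w) (at w)"
    and "x > 0" and "\<And>y. x \<le> y \<Longrightarrow> y \<le> x + real k \<Longrightarrow> norm (F k (of_real y)) \<le> B"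
  shows "norm (Dd k (F 0) (of_real x)) \<le> B"
  using assms
proof (induction k arbitrary: F x)
  case 0
  then show ?case by simp
next
  case (Suc k)
  define G where "G = (\<lambda>j. F (Suc j))"
  have dG: "\<And>w. Re w > 0 \<Longrightarrow> (Dd k (F 0) has_field_derivative Dd k (F 1) w) (at w)"
    by (rule Dd_deriv) (use Suc.prems in auto)
  define S where "S = closed_segment (complex_of_real x) (of_real (x+1))"
  have S: "z \<in> S \<Longrightarrow> \<exists>y. z = of_real y \<and> x \<le> y \<and> y \<le> x + 1" for z
    unfolding S_def closed_segment_of_real closed_segment_eq_real_ivl by auto
  have "norm (Dd k (F 0) (of_real x) - Dd k (F 0) (of_real (x + 1))) \<le> B * norm (of_real x - (of_real (x+1)::complex))"
  proof (rule field_differentiable_bound[where S=S])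
    show "convex S" unfolding S_def by simp
    fix z assume "z \<in> S"
    then obtain y where y: "z = of_real y" "x \<le> y" "y \<le> x + 1" using S by blast
    show "(Dd k (F 0) has_field_derivative Dd k (F 1) z) (at z within S)"
      using dG[of z] y Suc.prems(2) by (auto intro: has_field_derivative_at_within)
    have "norm (Dd k (G 0) (of_real y)) \<le> B"
    proof (rule Suc.IH)
      show "\<And>j w. Re w > 0 \<Longrightarrow> (G j has_field_derivative G (Suc j) w) (at w)"
        unfolding G_def using Suc.prems(1) by auto
      show "y > 0" using y Suc.prems(2) by simp
      fix y' assume "y \<le> y'" "y' \<le> y + real k"
      then show "norm (G k (of_real y')) \<le> B" unfolding G_def
        using Suc.prems(3)[of y'] y by simp
    qed
    then show "norm (Dd k (F 1) z) \<le> B" using y by (simp add: G_def)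
  next
    show "of_real x \<in> S" "of_real (x + 1) \<in> S" unfolding S_def by auto
  qed
  then show ?case by simp
qed

definition Fam :: "complex \<Rightarrow> nat \<Rightarrow> complex \<Rightarrow> complex" where
  "Fam z j w = (\<Prod>i<j. (-z - of_nat i)) * w powr (-z - of_nat j)"

lemma Fam_deriv:
  assumes "Re w > 0" shows "(Fam z j has_field_derivative Fam z (Suc j) w) (at w)"
proof -
  have nw: "w \<notin> \<real>\<^sub>\<le>\<^sub>0" using assms by (auto simp: nonpos_Reals_def)
  have "((\<lambda>w. (\<Prod>i<j. (-z - of_nat i)) * w powr (-z - of_nat j)) has_field_derivative
     (\<Prod>i<j. (-z - of_nat i)) * ((-z - of_nat j) * w powr (-z - of_nat j - 1))) (at w)"
    by (intro DERIV_cmult has_field_derivative_powr nw)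
  moreover have "-z - of_nat j - 1 = -z - of_nat (Suc j)" by simp
  ultimately show ?thesis unfolding Fam_def[abs_def] by (simp add: mult.assoc)
qed

lemma Fam0: "Fam z 0 w = w powr (-z)" by (simp add: Fam_def)

lemma Dd_Fam_bound:
  assumes "Re z + real k \<ge> 0"
  shows "norm (Dd k (Fam z 0) (of_real (real n + 1))) \<le> (\<Prod>i<k. norm z + real i) * (real n + 1) powr (-Re z - real k)"
proof (rule Dd_bound)
  show "\<And>j w. Re w > 0 \<Longrightarrow> (Fam z j has_field_derivative Fam z (Suc j) w) (at w)"
    by (rule Fam_deriv)
  show "real n + 1 > 0" by simp
  fix y assume y: "real n + 1 \<le> y" "y \<le> real n + 1 + real k"
  have "norm (Fam z k (of_real y)) = (\<Prod>i<k. norm (-z - of_nat i)) * y powr (-Re z - real k)"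
    unfolding Fam_def using y by (simp add: norm_mult prod_norm norm_powr_real_powr)
  also have "\<dots> \<le> (\<Prod>i<k. norm z + real i) * (real n + 1) powr (-Re z - real k)"
  proof (rule mult_mono)
    show "(\<Prod>i<k. norm (-z - of_nat i)) \<le> (\<Prod>i<k. norm z + real i)"
    proof (rule prod_mono)
      fix i assume "i \<in> {..<k}"
      have "norm (-z - of_nat i) \<le> norm (-z) + norm (of_nat i :: complex)" by (rule norm_triangle_ineq4)
      then show "0 \<le> norm (-z - of_nat i) \<and> norm (-z - of_nat i) \<le> norm z + real i" by simp
    qed
    show "y powr (-Re z - real k) \<le> (real n + 1) powr (-Re z - real k)"
      using assms y by (intro powr_mono2') auto
  qed (auto intro: prod_nonneg)
  finally show "norm (Fam z k (of_real y)) \<le> (\<Prod>i<k. norm z + real i) * (real n + 1) powr (-Re z - real k)" .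
qed

lemma Dd_Fam_holo:
  assumes "Re w > 0" shows "(\<lambda>z. Dd k (Fam z 0) w) holomorphic_on UNIV"
  using assms
proof (induction k arbitrary: w)
  case 0
  then show ?case by (simp add: Fam0 holomorphic_intros)
next
  case (Suc k)
  have "(\<lambda>z. Dd k (Fam z 0) w - Dd k (Fam z 0) (w + 1)) holomorphic_on UNIV"
    using Suc by (intro holomorphic_intros) auto
  then show ?case by simp
qed

lemma summable_shift_powr:
  assumes "s < -1" shows "summable (\<lambda>n. (real n + 1) powr s)"
proof -
  have "summable (\<lambda>n. real n powr s)" using assms summable_real_powr_iff by blast
  then have "summable (\<lambda>n. real (Suc n) powr s)" by (subst summable_Suc_iff)
  then show ?thesis by (simp add: add.commute)
qed

lemma Dd_Fam_summable:
  assumes "Re z + real k > 1"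
  shows "summable (\<lambda>n. norm ((-1)^n * Dd k (Fam z 0) (of_real (real n + 1))))"
proof (rule summable_comparison_test)
  show "\<exists>N. \<forall>n\<ge>N. norm (norm ((-1)^n * Dd k (Fam z 0) (of_real (real n + 1)))) \<le>
      (\<Prod>i<k. norm z + real i) * (real n + 1) powr (-Re z - real k)"
    using Dd_Fam_bound[of z k] assms by (auto simp: norm_mult norm_power)
  show "summable (\<lambda>n. (\<Prod>i<k. norm z + real i) * (real n + 1) powr (-Re z - real k))"
    using assms by (intro summable_mult summable_shift_powr) auto
qed

lemma Dd_Fam_lim0:
  assumes "Re z + real k > 0"
  shows "(\<lambda>n. Dd k (Fam z 0) (of_real (real n + 1))) \<longlonglongrightarrow> 0"
proof (rule Lim_null_comparison)
  show "\<forall>\<^sub>F n in sequentially. norm (Dd k (Fam z 0) (of_real (real n + 1))) \<le>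
      (\<Prod>i<k. norm z + real i) * (real n + 1) powr (-Re z - real k)"
    using Dd_Fam_bound[of z k] assms by auto
  have fl: "filterlim (\<lambda>n. real n + 1) at_top sequentially"
    using filterlim_tendsto_add_at_top[OF tendsto_const[of 1] filterlim_real_sequentially]
    by (simp add: add.commute)
  have "(\<lambda>n. (real n + 1) powr (-Re z - real k)) \<longlonglongrightarrow> 0"
    using assms by (intro tendsto_neg_powr fl) auto
  then show "(\<lambda>n. (\<Prod>i<k. norm z + real i) * (real n + 1) powr (-Re z - real k)) \<longlonglongrightarrow> 0"
    using tendsto_mult_right_zero by blast
qed

lemma sbp:
  fixes b :: "nat \<Rightarrow> complex"
  assumes b0: "b \<longlonglongrightarrow> 0" and T: "(\<lambda>n. (-1)^n * (b n - b (Suc n))) sums T"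
  shows "(\<lambda>n. (-1)^n * b n) sums ((T + b 0) / 2)"
proof -
  have id: "(\<Sum>n<N. (-1)^n * (b n - b (Suc n))) = 2 * (\<Sum>n<N. (-1)^n * b n) + (-1)^N * b N - b 0" for N
    by (induction N) (auto simp: algebra_simps)
  have id2: "(\<Sum>n<N. (-1)^n * b n) = ((\<Sum>n<N. (-1)^n * (b n - b (Suc n))) + b 0 - (-1)^N * b N) / 2" for N
    unfolding id by simp
  have z: "(\<lambda>N. (-1)^N * b N) \<longlonglongrightarrow> 0"
    by (rule Lim_null_comparison[where g="\<lambda>N. norm (b N)"])
       (auto simp: norm_mult norm_power intro: tendsto_norm_zero b0)
  have "(\<lambda>N. ((\<Sum>n<N. (-1)^n * (b n - b (Suc n))) + b 0 - (-1)^N * b N) / 2) \<longlonglongrightarrow> (T + b 0 - 0) / 2"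
    using T unfolding sums_def by (intro tendsto_intros z) auto
  then show ?thesis unfolding sums_def id2[symmetric] by simp
qed

definition Gs :: "nat \<Rightarrow> complex \<Rightarrow> complex" where
  "Gs k z = (\<Sum>n. (-1)^n * Dd k (Fam z 0) (of_real (real n + 1)))"

definition gk :: "nat \<Rightarrow> complex \<Rightarrow> complex" where
  "gk k z = (\<Sum>j<k. Dd j (Fam z 0) 1 / 2^(Suc j)) + Gs k z / 2^k"

lemma Gs_sums:
  assumes "Re z + real k > 1"
  shows "(\<lambda>n. (-1)^n * Dd k (Fam z 0) (of_real (real n + 1))) sums Gs k z"
  unfolding Gs_def using summable_norm_cancel[OF Dd_Fam_summable[OF assms]]
  by (simp add: summable_sums)

lemma gk_step:
  assumes "Re z > 1 - real k"
  shows "gk k z = gk (Suc k) z"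
proof -
  define b where "b n = Dd k (Fam z 0) (of_real (real n + 1))" for n
  have b0: "b \<longlonglongrightarrow> 0" unfolding b_def using assms by (intro Dd_Fam_lim0) auto
  have "(\<lambda>n. (-1)^n * Dd (Suc k) (Fam z 0) (of_real (real n + 1))) sums Gs (Suc k) z"
    using assms by (intro Gs_sums) auto
  moreover have "Dd (Suc k) (Fam z 0) (of_real (real n + 1)) = b n - b (Suc n)" for n
    unfolding b_def by (simp add: add_ac)
  ultimately have "(\<lambda>n. (-1)^n * (b n - b (Suc n))) sums Gs (Suc k) z" by simp
  from sbp[OF b0 this] have "(\<lambda>n. (-1)^n * b n) sums ((Gs (Suc k) z + b 0) / 2)" .
  moreover have "(\<lambda>n. (-1)^n * b n) sums Gs k z" unfolding b_def
    using assms by (intro Gs_sums) auto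
  ultimately have "Gs k z = (Gs (Suc k) z + b 0) / 2" using sums_unique2 by blast
  moreover have "b 0 = Dd k (Fam z 0) 1" unfolding b_def by simp
  ultimately have eq: "Gs k z = (Gs (Suc k) z + Dd k (Fam z 0) 1) / 2" by simp
  show ?thesis unfolding gk_def eq by (simp add: field_simps)
qed

lemma Gs_holo: "Gs k holomorphic_on {z. Re z > 1 - real k}"
proof (subst holomorphic_on_open[OF open_halfspace_Re_gt], safe)
  fix z0 assume z0: "1 - real k < Re z0"
  define d where "d = (Re z0 - (1 - real k)) / 2"
  have d: "d > 0" using z0 by (simp add: d_def)
  define C where "C = (\<Prod>i<k. norm z0 + d + real i)"
  define f where "f n z = (-1)^n * Dd k (Fam z 0) (of_real (real n + 1))" for n z
  have ul: "uniform_limit (cball z0 d) (\<lambda>N z. \<Sum>n<N. f n z) (\<lambda>z. \<Sum>n. f n z) sequentially"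
  proof (rule Weierstrass_m_test_ev)
    show "summable (\<lambda>n. C * (real n + 1) powr (-1 - d))"
      using d by (intro summable_mult summable_shift_powr) auto
    show "\<forall>\<^sub>F n in sequentially. \<forall>z\<in>cball z0 d. norm (f n z) \<le> C * (real n + 1) powr (-1 - d)"
    proof (intro always_eventually allI ballI)
      fix n z assume z: "z \<in> cball z0 d"
      have "norm (z - z0) \<le> d" using z by (simp add: dist_norm norm_minus_commute)
      then have rez: "Re z \<ge> Re z0 - d" and nz: "norm z \<le> norm z0 + d"
        using abs_Re_le_cmod[of "z - z0"] norm_triangle_ineq2[of z z0] by auto
      have "norm (f n z) \<le> (\<Prod>i<k. norm z + real i) * (real n + 1) powr (-Re z - real k)"
      proof -
        have "Re z + real k \<ge> 0" using rez z0 unfolding d_def by (simp add: field_simps)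
        then show ?thesis unfolding f_def using Dd_Fam_bound[of z k n]
          by (simp add: norm_mult norm_power)
      qed
      also have "\<dots> \<le> C * (real n + 1) powr (-1 - d)"
      proof (rule mult_mono)
        show "(\<Prod>i<k. norm z + real i) \<le> C" unfolding C_def
          using nz by (intro prod_mono) auto
        show "(real n + 1) powr (-Re z - real k) \<le> (real n + 1) powr (-1 - d)"
          using rez by (intro powr_mono) (auto simp: d_def field_simps)
      qed (use d in \<open>auto simp: C_def intro!: prod_nonneg add_nonneg_nonneg\<close>)
      finally show "norm (f n z) \<le> C * (real n + 1) powr (-1 - d)" .
    qed
  qed
  obtain "(\<lambda>z. \<Sum>n. f n z) holomorphic_on ball z0 d"
  proof (rule holomorphic_uniform_limit[OF _ ul])
    have "(\<lambda>z. \<Sum>n<N. f n z) holomorphic_on UNIV" for N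
      unfolding f_def by (intro holomorphic_intros Dd_Fam_holo) auto
    then show "\<forall>\<^sub>F N in sequentially. continuous_on (cball z0 d) (\<lambda>z. \<Sum>n<N. f n z) \<and>
        (\<lambda>z. \<Sum>n<N. f n z) holomorphic_on ball z0 d"
      by (intro always_eventually allI conjI holomorphic_on_imp_continuous_on)
         (auto intro: holomorphic_on_subset)
  qed auto
  then have "Gs k holomorphic_on ball z0 d" unfolding Gs_def f_def by simp
  then have "Gs k field_differentiable (at z0)"
    using d by (intro holomorphic_on_imp_differentiable_at[of _ "ball z0 d"]) auto
  then show "\<exists>f'. (Gs k has_field_derivative f') (at z0)"
    by (auto simp: field_differentiable_def)
qed

definition fE :: "complex \<Rightarrow> complex" where
  "fE z = gk (nat \<lceil>1 - Re z\<rceil> + 1) z"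

lemma gk_mono:
  assumes "Re z > 1 - real k" "k \<le> m" shows "gk m z = gk k z"
  using assms(2)
proof (induction m rule: dec_induct)
  case (step m)
  then have "gk m z = gk (Suc m) z" using assms(1) by (intro gk_step) auto
  then show ?case using step by simp
qed simp

lemma fE_eq:
  assumes "Re z > 1 - real k" shows "fE z = gk k z"
proof -
  define k0 where "k0 = nat \<lceil>1 - Re z\<rceil> + 1"
  have "real k0 \<ge> 1 - Re z + 1" unfolding k0_def by linarith
  then have k0: "Re z > 1 - real k0" by simp
  have "fE z = gk k0 z" unfolding fE_def k0_def ..
  also have "\<dots> = gk (max k k0) z" using k0 by (intro gk_mono[symmetric]) auto
  also have "\<dots> = gk k z" using assms by (intro gk_mono) auto
  finally show ?thesis .
qed

lemma gk_holo: "gk k holomorphic_on {z. Re z > 1 - real k}"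
proof -
  have "(\<lambda>z. (\<Sum>j<k. Dd j (Fam z 0) 1 / 2^(Suc j)) + Gs k z / 2^k) holomorphic_on {z. Re z > 1 - real k}"
    by (intro holomorphic_intros Gs_holo holomorphic_on_subset[OF Dd_Fam_holo]) auto
  then show ?thesis unfolding gk_def[abs_def] .
qed

lemma fE_holo: "fE holomorphic_on UNIV"
proof -
  have "fE holomorphic_on (\<Union>k\<in>UNIV. {z. Re z > 1 - real k})"
  proof (rule holomorphic_on_UN_open)
    fix k :: nat
    show "open {z. Re z > 1 - real k}" by (rule open_halfspace_Re_gt)
    show "fE holomorphic_on {z. Re z > 1 - real k}"
      by (rule holomorphic_transform[OF gk_holo]) (auto simp: fE_eq)
  qed
  moreover have "(\<Union>k\<in>UNIV. {z. Re z > 1 - real k}) = UNIV"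
  proof safe
    fix z :: complex
    have "Re z > 1 - real (nat \<lceil>1 - Re z\<rceil> + 1)" by linarith
    then show "z \<in> (\<Union>k\<in>UNIV. {z. Re z > 1 - real k})" by blast
  qed auto
  ultimately show ?thesis by simp
qed

lemma Dd_Suc_shift: "Dd (Suc k) f (of_real (real n + 1)) = Dd k f (of_real (real n + 1)) - Dd k f (of_real (real (Suc n) + 1))"
  by (simp add: add_ac)

lemma eta_sums:
  assumes "Re z > 0"
  shows "(\<lambda>n. (-1)^n / (complex_of_real (real n + 1)) powr z) sums fE z"
proof -
  define b where "b n = Dd 0 (Fam z 0) (of_real (real n + 1))" for n
  have b0: "b \<longlonglongrightarrow> 0" unfolding b_def using assms by (intro Dd_Fam_lim0) auto
  have "(\<lambda>n. (-1)^n * Dd 1 (Fam z 0) (of_real (real n + 1))) sums Gs 1 z"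
    using assms by (intro Gs_sums) auto
  then have "(\<lambda>n. (-1)^n * (b n - b (Suc n))) sums Gs 1 z"
    unfolding b_def One_nat_def Dd_Suc_shift .
  from sbp[OF b0 this] have "(\<lambda>n. (-1)^n * b n) sums ((Gs 1 z + b 0) / 2)" .
  moreover have "(Gs 1 z + b 0) / 2 = fE z"
    using fE_eq[of 1 z] assms by (simp add: gk_def b_def Fam0 add_divide_distrib)
  moreover have "b n = 1 / (complex_of_real (real n + 1)) powr z" for n
    unfolding b_def by (simp add: Fam0 powr_minus_divide)
  ultimately show ?thesis by simp
qed

lemma zetaE_eq: "zetaE = fE"
  unfolding zetaE_def zetaE_h_def
proof (rule the_equality)
  show "fE holomorphic_on UNIV \<and> (\<forall>z. 0 < Re z \<longrightarrow>
      (\<lambda>n. (- 1) ^ n / complex_of_real (real n + 1) powr z) sums fE z)"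
    using fE_holo eta_sums by auto
  fix g assume g: "g holomorphic_on UNIV \<and> (\<forall>z. 0 < Re z \<longrightarrow>
      (\<lambda>n. (- 1) ^ n / complex_of_real (real n + 1) powr z) sums g z)"
  show "g = fE"
  proof
    fix z
    show "g z = fE z"
    proof (rule analytic_continuation_open[of "{z. Re z > 0}" UNIV g fE z])
      show "{z. Re z > 0} \<noteq> {}" by (auto intro!: exI[of _ 1])
      show "\<And>w. w \<in> {z. Re z > 0} \<Longrightarrow> g w = fE w" using g eta_sums sums_unique2 by blast
    qed (use g fE_holo open_halfspace_Re_gt in auto)
  qed
qed

lemma zetaE_1: "zetaE 1 = of_real (ln 2)"
proof -
  have "(\<lambda>n. (-1)^n / (complex_of_real (real n + 1)) powr 1) sums zetaE 1"
    unfolding zetaE_eq using eta_sums[of 1] by simp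
  moreover have "(complex_of_real (real n + 1)) powr 1 = complex_of_real (real n + 1)" for n
    using powr_of_real[of "real n + 1" 1] by simp
  ultimately have "(\<lambda>n. (-1)^n / complex_of_real (real n + 1)) sums zetaE 1" by simp
  moreover have "(\<lambda>n. complex_of_real ((-1)^n / real_of_nat (Suc n))) sums of_real (ln 2)"
    by (rule sums_of_real[OF alternating_harmonic_series_sums])
  ultimately show ?thesis using sums_unique2 by (simp add: add.commute)
qed

lemma tg0: "tilde_gamma 0 1 = of_real (ln 2)"
  unfolding tilde_gamma_def using zetaE_1 by (simp add: zetaE_def)

lemma part2: "(\<Sum>j. (-1) ^ (Suc j + 1) / (of_nat (Suc j) * of_nat (Suc j + 1)) :: complex) = of_real (2 * ln 2 - 1)"
proof -
  define f :: "nat \<Rightarrow> real" where "f n = (-1)^n / real (Suc n)" for n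
  have f: "f sums ln 2" unfolding f_def by (rule alternating_harmonic_series_sums)
  then have "(\<lambda>n. f (Suc n)) sums (ln 2 - f 0)" by (simp add: sums_Suc_iff)
  then have g: "(\<lambda>n. - f (Suc n)) sums (1 - ln 2)" using sums_minus by (fastforce simp: f_def)
  have "(\<lambda>n. f n + f (Suc n)) sums (ln 2 - (1 - ln 2))"
    using sums_diff[OF f g] by simp
  moreover have "f n + f (Suc n) = (-1) ^ (Suc n + 1) / (real (Suc n) * real (Suc n + 1))" for n
    unfolding f_def by (simp add: field_simps)
  ultimately have "(\<lambda>n. (-1) ^ (Suc n + 1) / (real (Suc n) * real (Suc n + 1))) sums (2 * ln 2 - 1)"
    by simp
  from sums_of_real[OF this, where 'a=complex]
  have "(\<lambda>n. (-1) ^ (Suc n + 1) / (of_nat (Suc n) * of_nat (Suc n + 1)) :: complex) sums of_real (2 * ln 2 - 1)"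
    by simp
  then show ?thesis by (rule sums_unique[symmetric])
qed

lemma part3: "1/2 * (Digamma 2 - Digamma (3/2) + 1) = (of_real (ln 2) :: complex)"
proof -
  have d2: "Digamma (2::complex) = 1 - euler_mascheroni"
    using Digamma_numeral[of "num.Bit0 num.One", where 'a=complex] by (simp add: harm_expand)
  have "Digamma (of_nat 1 + 1/2 :: complex) = 2 - euler_mascheroni - of_real (2 * ln 2)"
    using Digamma_half_integer[of 1, where 'a=complex] by simp
  moreover have "(of_nat 1 + 1/2 :: complex) = 3/2" by simp
  ultimately have d3: "Digamma (3/2::complex) = 2 - euler_mascheroni - of_real (2 * ln 2)" by simp
  show ?thesis unfolding d2 d3 by simp
qed



lemma limit_from_pieces:
  fixes h :: "real \<Rightarrow> complex" and e :: "nat \<Rightarrow> complex"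
  assumes pieces: "\<And>n. (h has_integral (-1)^n * e n) {real n + 1..real n + 2}"
    and bound: "\<And>t. t \<ge> 1 \<Longrightarrow> norm (h t) \<le> t powr (-a)"
    and a: "a > 0"
    and S: "(\<lambda>n. (-1)^n * e n) sums I"
  shows "((\<lambda>T. integral {1..T} h) \<longlongrightarrow> I) at_top"
proof -
  define P where "P N = (\<Sum>n<N. (-1)^n * e n)" for N
  have PI: "P \<longlonglongrightarrow> I" using S unfolding sums_def P_def .
  have HP: "(h has_integral P N) {1..real N + 1}" for N
  proof (induction N)
    case 0
    then show ?case using has_integral_refl(2)[of h 1] by (simp add: P_def)
  next
    case (Suc N)
    have "(h has_integral (P N + (-1)^N * e N)) {1..real N + 2}"
      by (rule has_integral_combine[OF _ _ Suc pieces]) auto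
    then show ?case by (simp add: P_def add_ac)
  qed
  define M where "M T = nat \<lfloor>T\<rfloor> - 1" for T :: real
  have fM: "filterlim M sequentially at_top"
    unfolding filterlim_at_top
  proof
    fix Z :: nat
    show "\<forall>\<^sub>F T in at_top. Z \<le> M T"
      unfolding eventually_at_top_linorder M_def
      by (rule exI[of _ "real Z + 2"]) linarith
  qed
  have PM: "((\<lambda>T. P (M T)) \<longlongrightarrow> I) at_top"
    by (rule filterlim_compose[OF PI fM])
  define R where "R T = integral {1..T} h - P (M T)" for T
  have Rb: "norm (R T) \<le> (T - 1) powr (-a)" if T: "T \<ge> 2" for T
  proof -
    define N where "N = M T"
    have N1: "real N + 1 \<le> T" "T \<le> real N + 2" "real N + 1 \<ge> 1"
      using T unfolding N_def M_def by linarith+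
    have int2: "h integrable_on {1..real N + 2}"
      using has_integral_combine[OF _ _ HP[of N] pieces[of N]] by auto
    have intT: "h integrable_on {1..T}"
      by (rule integrable_subinterval_real[OF int2]) (use N1 in auto)
    have intR: "h integrable_on {real N + 1..T}"
      by (rule integrable_subinterval_real[OF int2]) (use N1 in auto)
    have "integral {1..T} h = integral {1..real N + 1} h + integral {real N + 1..T} h"
      using Henstock_Kurzweil_Integration.integral_combine[OF _ _ intT, of "real N + 1"] N1 by simp
    also have "integral {1..real N + 1} h = P N" using HP[of N] by (rule integral_unique)
    finally have RT: "R T = integral {real N + 1..T} h" unfolding R_def N_def by simp
    have "norm (integral {real N + 1..T} h) \<le> (real N + 1) powr (-a) * Henstock_Kurzweil_Integration.content {real N + 1..T}"
    proof (rule has_integral_bound_real[where S="{}"])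
      show "(h has_integral integral {real N + 1..T} h) {real N + 1..T}"
        using intR by (rule integrable_integral)
      fix t assume t: "t \<in> {real N + 1..T} - {}"
      then have "norm (h t) \<le> t powr (-a)" using N1 by (intro bound) auto
      also have "\<dots> \<le> (real N + 1) powr (-a)" using t a by (intro powr_mono2') auto
      finally show "norm (h t) \<le> (real N + 1) powr (-a)" .
    qed auto
    also have "\<dots> \<le> (real N + 1) powr (-a) * 1" using N1 by (intro mult_left_mono) auto
    also have "\<dots> \<le> (T - 1) powr (-a)" using N1 a T by (simp, intro powr_mono2') auto
    finally show ?thesis unfolding RT .
  qed
  have R0: "(R \<longlongrightarrow> 0) at_top"
  proof (rule Lim_null_comparison)
    show "\<forall>\<^sub>F T in at_top. norm (R T) \<le> (T - 1) powr (-a)"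
      using eventually_ge_at_top[of "2::real"] by (rule eventually_mono) (rule Rb)
    have "filterlim (\<lambda>T::real. T - 1) at_top at_top"
      by (rule filterlim_tendsto_add_at_top[OF tendsto_const filterlim_ident, of "-1", simplified])
    then show "((\<lambda>T. (T - 1) powr (-a)) \<longlongrightarrow> 0) at_top"
      using a by (intro tendsto_neg_powr) auto
  qed
  have "((\<lambda>T. P (M T) + R T) \<longlongrightarrow> I + 0) at_top" by (intro tendsto_intros PM R0)
  then show ?thesis unfolding R_def by simp
qed


lemma E0bar_piece:
  assumes "t \<in> {real n + 1..real n + 2} - {real n + 1}"
  shows "E0bar (-t) = (-1)^n"
proof -
  have "\<lfloor>-t\<rfloor> = - (int n + 2)" using assms by (simp add: floor_eq_iff)
  then show ?thesis unfolding E0bar_def by simp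
qed

lemma h_bound:
  fixes z :: complex
  assumes "t \<ge> 1"
  shows "norm (complex_of_real (E0bar (-t)) / (complex_of_real t) powr (z + 1)) \<le> t powr (-(Re z + 1))"
proof -
  have "norm (complex_of_real (E0bar (-t))) = 1" by (simp add: E0bar_def)
  moreover have "norm ((complex_of_real t) powr (z + 1)) = t powr (Re z + 1)"
    using assms by (simp add: norm_powr_real_powr)
  moreover have "t powr (-(Re z + 1)) = 1 / t powr (Re z + 1)" by (rule powr_minus_divide)
  ultimately show ?thesis by (simp only: norm_divide)
qed

lemma pieces_gen:
  fixes z :: complex
  assumes "((\<lambda>t. 1 / (complex_of_real t) powr (z + 1)) has_integral e) {real n + 1..real n + 2}"
  shows "((\<lambda>t. complex_of_real (E0bar (-t)) / (complex_of_real t) powr (z + 1)) has_integral (-1)^n * e) {real n + 1..real n + 2}"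
proof (rule has_integral_spike_finite[where S="{real n + 1}"])
  show "((\<lambda>t. (-1)^n * (1 / (complex_of_real t) powr (z + 1))) has_integral (-1)^n * e) {real n + 1..real n + 2}"
    by (rule has_integral_mult_right[OF assms])
  fix t assume "t \<in> {real n + 1..real n + 2} - {real n + 1}"
  from E0bar_piece[OF this]
  show "complex_of_real (E0bar (-t)) / (complex_of_real t) powr (z + 1) = (-1)^n * (1 / (complex_of_real t) powr (z + 1))"
    by simp
qed auto

lemma piece_nz:
  fixes z :: complex
  assumes "z \<noteq> 0"
  shows "((\<lambda>t. 1 / (complex_of_real t) powr (z + 1)) has_integral Dd 1 (Fam z 0) (of_real (real n + 1)) / z) {real n + 1..real n + 2}"
proof -
  define A where "A t = - ((complex_of_real t) powr (-z)) / z" for t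
  have "((\<lambda>t. (complex_of_real t) powr (-z - 1)) has_integral (A (real n + 2) - A (real n + 1))) {real n + 1..real n + 2}"
  proof (rule fundamental_theorem_of_calculus)
    fix x assume x: "x \<in> {real n + 1..real n + 2}"
    then have nw: "complex_of_real x \<notin> \<real>\<^sub>\<le>\<^sub>0" by (auto simp: nonpos_Reals_def)
    have "((\<lambda>w. - (w powr (-z)) / z) has_field_derivative (- ((-z) * (complex_of_real x) powr (-z - 1)) / z)) (at (complex_of_real x))"
      using DERIV_cdivide[OF DERIV_minus[OF has_field_derivative_powr[OF nw, of "-z"]], of z] by simp
    then have "((\<lambda>w. - (w powr (-z)) / z) has_field_derivative (complex_of_real x) powr (-z - 1)) (at (complex_of_real x))"
      using assms by simp
    from has_vector_derivative_real_field[OF this]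
    show "(A has_vector_derivative (complex_of_real x) powr (-z - 1)) (at x within {real n + 1..real n + 2})"
      unfolding A_def .
  qed auto
  moreover have "A (real n + 2) - A (real n + 1) = Dd 1 (Fam z 0) (of_real (real n + 1)) / z"
  proof -
    have "complex_of_real (real n + 1) + 1 = complex_of_real (real n + 2)" by simp
    then show ?thesis unfolding A_def by (simp add: Fam0 diff_divide_distrib add_ac)
  qed
  moreover have "(complex_of_real t) powr (-z - 1) = 1 / (complex_of_real t) powr (z + 1)" for t
    by (simp add: powr_minus_divide[symmetric])
  ultimately show ?thesis by simp
qed

lemma piece_z0:
  "((\<lambda>t. 1 / (complex_of_real t) powr (0 + 1)) has_integral of_real (ln (real n + 2) - ln (real n + 1))) {real n + 1..real n + 2}"
proof -
  have "((\<lambda>t. of_real (1 / t)) has_integral (of_real (ln (real n + 2)) - of_real (ln (real n + 1)) :: complex)) {real n + 1..real n + 2}"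
  proof (rule fundamental_theorem_of_calculus)
    fix x assume x: "x \<in> {real n + 1..real n + 2}"
    show "((\<lambda>t. complex_of_real (ln t)) has_vector_derivative of_real (1 / x)) (at x within {real n + 1..real n + 2})"
      using x by (intro has_vector_derivative_of_real) (auto intro!: derivative_eq_intros)
  qed auto
  note I1 = this
  have eq: "1 / (complex_of_real t) powr (0 + 1) = of_real (1 / t)" if "t \<in> {real n + 1..real n + 2}" for t
    using that powr_of_real[of t 1] by simp
  have "((\<lambda>t. 1 / (complex_of_real t) powr (0 + 1)) has_integral (of_real (ln (real n + 2)) - of_real (ln (real n + 1)) :: complex)) {real n + 1..real n + 2}"
  proof (rule has_integral_spike_finite[where S="{}" and f="\<lambda>t. complex_of_real (1/t)"])
    show "finite {}" by simp
    show "\<And>x. x \<in> {real n + 1..real n + 2} - {} \<Longrightarrow> 1 / (complex_of_real x) powr (0 + 1) = of_real (1 / x)"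
      using eq by blast
  qed (rule I1)
  then show ?thesis by simp
qed

lemma Dd_Fam_zero: "Re w > 0 \<Longrightarrow> Dd k (Fam 0 0) w = (if k = 0 then 1 else 0)"
proof (induction k arbitrary: w)
  case 0
  then show ?case by (auto simp: Fam0)
next
  case (Suc k)
  have e: "Dd k (Fam 0 0) w = Dd k (Fam 0 0) (w + 1)"
    using Suc.IH[of w] Suc.IH[of "w+1"] Suc.prems by simp
  have "Dd (Suc k) (Fam 0 0) w = Dd k (Fam 0 0) w - Dd k (Fam 0 0) (w + 1)"
    by (rule Dd.simps(2))
  also have "\<dots> = 0" using e by simp
  finally show ?case by simp
qed

lemma main_part:
  fixes z :: complex
  assumes z: "Re z > -1"
  shows "\<exists>I. ((\<lambda>T. integral {1..T}
                 (\<lambda>t. complex_of_real (E0bar (-t)) / (complex_of_real t) powr (z + 1)))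
              \<longlongrightarrow> I) at_top
          \<and> zetaE z = 1/2 + 1/2 * z * I"
proof (cases "z = 0")
  case True
  define a where "a n = ln (real n + 2) - ln (real n + 1)" for n
  have "summable (\<lambda>n. (-1)^n * a n)"
  proof (rule summable_Leibniz')
    show "a \<longlonglongrightarrow> 0" unfolding a_def by real_asymp
    show "0 \<le> a n" for n unfolding a_def by simp
    show "a (Suc n) \<le> a n" for n
    proof -
      have "(real n + 3) * (real n + 1) \<le> (real n + 2) * (real n + 2)" by (simp add: algebra_simps)
      then have "ln ((real n + 3) * (real n + 1)) \<le> ln ((real n + 2) * (real n + 2))" by simp
      then have "ln (real n + 3) + ln (real n + 1) \<le> ln (real n + 2) + ln (real n + 2)"
        by (simp add: ln_mult)
      then show ?thesis unfolding a_def by (simp add: add_ac)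
    qed
  qed
  then have "(\<lambda>n. (-1)^n * a n) sums (\<Sum>n. (-1)^n * a n)" by (rule summable_sums)
  from sums_of_real[OF this, where 'a=complex]
  have S: "(\<lambda>n. (-1)^n * complex_of_real (a n)) sums of_real (\<Sum>n. (-1)^n * a n)" by simp
  have lim: "((\<lambda>T. integral {1..T}
                 (\<lambda>t. complex_of_real (E0bar (-t)) / (complex_of_real t) powr (z + 1)))
              \<longlongrightarrow> of_real (\<Sum>n. (-1)^n * a n)) at_top"
  proof (rule limit_from_pieces[where a = "Re z + 1", OF _ _ _ S])
    show "((\<lambda>t. complex_of_real (E0bar (-t)) / (complex_of_real t) powr (z + 1)) has_integral (-1)^n * of_real (a n)) {real n + 1..real n + 2}" for n
      unfolding True a_def by (rule pieces_gen[OF piece_z0])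
  qed (use z h_bound in auto)
  have "zetaE z = gk 2 0" unfolding zetaE_eq True by (rule fE_eq) simp
  also have "\<dots> = 1/2"
    by (simp add: gk_def Gs_def Dd_Fam_zero numeral_2_eq_2 del: Dd.simps)
  finally show ?thesis using lim True by auto
next
  case False
  define b where "b n = Dd 1 (Fam z 0) (of_real (real n + 1))" for n
  have b0: "b \<longlonglongrightarrow> 0" unfolding b_def using z by (intro Dd_Fam_lim0) auto
  have "(\<lambda>n. (-1)^n * Dd (Suc 1) (Fam z 0) (of_real (real n + 1))) sums Gs (Suc 1) z"
    using z by (intro Gs_sums) auto
  then have "(\<lambda>n. (-1)^n * (b n - b (Suc n))) sums Gs (Suc 1) z"
    unfolding b_def Dd_Suc_shift .
  from sbp[OF b0 this] have "(\<lambda>n. (-1)^n * b n) sums ((Gs (Suc 1) z + b 0) / 2)" .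
  from sums_divide[OF this, of z]
  have S: "(\<lambda>n. (-1)^n * (b n / z)) sums ((Gs (Suc 1) z + b 0) / 2 / z)" by simp
  have lim: "((\<lambda>T. integral {1..T}
                 (\<lambda>t. complex_of_real (E0bar (-t)) / (complex_of_real t) powr (z + 1)))
              \<longlongrightarrow> (Gs (Suc 1) z + b 0) / 2 / z) at_top"
  proof (rule limit_from_pieces[where a = "Re z + 1", OF _ _ _ S])
    show "((\<lambda>t. complex_of_real (E0bar (-t)) / (complex_of_real t) powr (z + 1)) has_integral (-1)^n * (b n / z)) {real n + 1..real n + 2}" for n
      unfolding b_def by (rule pieces_gen[OF piece_nz[OF False]])
  qed (use z h_bound in auto)
  have "zetaE z = gk (Suc 1) z" unfolding zetaE_eq using z by (intro fE_eq) simp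
  also have "\<dots> = 1/2 + Dd 1 (Fam z 0) 1 / 4 + Gs (Suc 1) z / 4"
    unfolding gk_def by (simp add: Fam0 lessThan_Suc del: Dd.simps(2))
  also have "1/2 + Dd 1 (Fam z 0) 1 / 4 + Gs (Suc 1) z / 4 = 1/2 + 1/2 * z * ((Gs (Suc 1) z + b 0) / 2 / z)"
  proof -
    have b00: "b 0 = Dd 1 (Fam z 0) 1" unfolding b_def by (simp del: Dd.simps)
    show ?thesis unfolding b00 using False by (simp add: field_simps del: Dd.simps)
  qed
  finally show ?thesis using lim by auto
qed

theorem corollary3p3:
  shows "(\<forall>z::complex. Re z > -1 \<longrightarrow>
      (\<exists>I. ((\<lambda>T. integral {1..T}
                 (\<lambda>t. complex_of_real (E0bar (-t)) / (complex_of_real t) powr (z + 1)))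
              \<longlongrightarrow> I) at_top
          \<and> zetaE z = 1/2 + 1/2 * z * I)) \<and>
    tilde_gamma 0 1 = 1/2 + 1/2 * (\<Sum>j. (-1) ^ (Suc j + 1) /
              (of_nat (Suc j) * of_nat (Suc j + 1))) \<and>
    tilde_gamma 0 1 = 1/2 * (Digamma 2 - Digamma (3/2) + 1)"
proof (intro conjI allI impI)
  fix z :: complex assume "Re z > -1"
  then show "\<exists>I. ((\<lambda>T. integral {1..T}
                 (\<lambda>t. complex_of_real (E0bar (-t)) / (complex_of_real t) powr (z + 1)))
              \<longlongrightarrow> I) at_top
          \<and> zetaE z = 1/2 + 1/2 * z * I" by (rule main_part)
next
  show "tilde_gamma 0 1 = 1/2 + 1/2 * (\<Sum>j. (-1) ^ (Suc j + 1) /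
              (of_nat (Suc j) * of_nat (Suc j + 1)))"
    unfolding tg0 part2 by (simp add: field_simps)
next
  show "tilde_gamma 0 1 = 1/2 * (Digamma 2 - Digamma (3/2) + 1)"
    unfolding tg0 part3 ..
qed

end
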